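(* Let $\gamma=(\gamma_1,\dots,\gamma_b)$ be a parallel map on $V=V_1\oplus\cdots\oplus V_b$, $V_i\cong(\mathbb F_2)^m$, with $0\gamma=0$. Suppose every $\gamma_i$ is differentially $2^r$-uniform with $r<m-1$ and strongly $r$-anti-invariant. If $\gamma$ maps $\mathcal L(W)$ onto a non-trivial partition $\mathcal{LA}_U(W_1|W_2)$, then $W$, $W_1$, $W_2$ are walls and $W=W_1=W_2$; in particular $\mathcal{LA}_U(W_1|W_2)$ is linear.
   Context: Let $m,b>1$, $n=mb$, $V=(\mathbb F_2)^n=V_1\oplus\cdots\oplus V_b$, $V_i\cong(\mathbb F_2)^m$. Permutations act on the right. A parallel map is $\gamma\in\mathrm{Sym}(V)$ with $(v_1\oplus\cdots\oplus v_b)\gamma=v_1\gamma_1\oplus\cdots\oplus v_b\gamma_b$, $\gamma_i\in\mathrm{Sym}(V_i)$ (S-boxes). A wall is $\bigoplus_{i\in I}V_i$ with $\emptyset\ne I\subsetneq\{1,\dots,b\}$. For $f:(\mathbb F_2)^m\to(\mathbb F_2)^m$, $f$ is differentially $\delta$-uniform if $\delta=\max_{a\ne0,b}|\{x:f(x+a)+f(x)=b\}|$; with $f(0)=0$ and $1\le r<m$, $f$ is strongly $r$-anti-invariant if for all subspaces $U,W$ with $f(U)=W$, either $\dim U=\dim W<m-r$ or $U=W=(\mathbb F_2)^m$. A permutation maps a partition $\mathcal A$ onto $\mathcal B$ if it sends the blocks of $\mathcal A$ exactly onto the blocks of $\mathcal B$; a partition is trivial if it is the partition into singletons or $\{V\}$.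 $\mathcal L(W)=\{W+v:v\in V\}$ for a subspace $W$ (linear partition). For a subspace $U$ of dimension $n-1$ and subspaces $W_1,W_2\subseteq U$, $\mathcal{LA}_U(W_1|W_2)=\{W_1+v:v\in U\}\cup\{(W_2+\bar v)+v:v\in U\}$ for any $\bar v\in V\setminus U$. *)

theory Defs
  imports Main
begin

text \<open>Vectors of (F_2)^k are modelled as functions nat => bool (True = 1) that
vanish outside the coordinates 0..<k; addition is coordinatewise xor.\<close>

definition Vsp :: "nat \<Rightarrow> (nat \<Rightarrow> bool) set" where
  "Vsp k = {v. \<forall>i. k \<le> i \<longrightarrow> \<not> v i}"

definition vzero :: "nat \<Rightarrow> bool" where
  "vzero = (\<lambda>i. False)"

definition vadd :: "(nat \<Rightarrow> bool) \<Rightarrow> (nat \<Rightarrow> bool) \<Rightarrow> (nat \<Rightarrow> bool)" where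
  "vadd u v = (\<lambda>i. u i \<noteq> v i)"

text \<open>Linear subspaces of (F_2)^k (over F_2 these are exactly the subsets containing 0
closed under addition; scalar multiplication by 0 and 1 is then automatic).\<close>
definition subspace2 :: "nat \<Rightarrow> (nat \<Rightarrow> bool) set \<Rightarrow> bool" where
  "subspace2 k U \<longleftrightarrow> U \<subseteq> Vsp k \<and> vzero \<in> U \<and> (\<forall>u\<in>U. \<forall>v\<in>U. vadd u v \<in> U)"

definition dim2 :: "(nat \<Rightarrow> bool) set \<Rightarrow> nat" where
  "dim2 U = (THE d. card U = 2 ^ d)"

definition coset2 :: "(nat \<Rightarrow> bool) set \<Rightarrow> (nat \<Rightarrow> bool) \<Rightarrow> (nat \<Rightarrow> bool) set" where
  "coset2 W v = (\<lambda>w. vadd w v) ` W"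

definition blk :: "nat \<Rightarrow> nat \<Rightarrow> (nat \<Rightarrow> bool) \<Rightarrow> (nat \<Rightarrow> bool)" where
  "blk m i v = (\<lambda>j. if j < m then v (i * m + j) else False)"

definition parmap :: "nat \<Rightarrow> nat \<Rightarrow> (nat \<Rightarrow> (nat \<Rightarrow> bool) \<Rightarrow> (nat \<Rightarrow> bool))
                      \<Rightarrow> (nat \<Rightarrow> bool) \<Rightarrow> (nat \<Rightarrow> bool)" where
  "parmap m b g v = (\<lambda>k. if k < m * b then g (k div m) (blk m (k div m) v) (k mod m) else False)"

text \<open>Walls: \<Oplus>_{i\<in>I} V_i with I nonempty proper subset of the block indices.\<close>
definition wall :: "nat \<Rightarrow> nat \<Rightarrow> (nat \<Rightarrow> bool) set \<Rightarrow> bool" where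
  "wall m b X \<longleftrightarrow> (\<exists>I. I \<noteq> {} \<and> I \<subset> {0..<b} \<and>
      X = {v \<in> Vsp (m * b). \<forall>k < m * b. k div m \<notin> I \<longrightarrow> \<not> v k})"

definition diff_uniform :: "nat \<Rightarrow> ((nat \<Rightarrow> bool) \<Rightarrow> (nat \<Rightarrow> bool)) \<Rightarrow> nat \<Rightarrow> bool" where
  "diff_uniform m f \<delta> \<longleftrightarrow>
     \<delta> = Max {card {x \<in> Vsp m. vadd (f (vadd x a)) (f x) = c} | a c.
                a \<in> Vsp m \<and> a \<noteq> vzero \<and> c \<in> Vsp m}"

definition strongly_anti_invariant :: "nat \<Rightarrow> nat \<Rightarrow> ((nat \<Rightarrow> bool) \<Rightarrow> (nat \<Rightarrow> bool)) \<Rightarrow> bool" where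
  "strongly_anti_invariant m r f \<longleftrightarrow> f vzero = vzero \<and> 1 \<le> r \<and> r < m \<and>
     (\<forall>U W. subspace2 m U \<and> subspace2 m W \<and> f ` U = W \<longrightarrow>
        (dim2 U = dim2 W \<and> dim2 W < m - r) \<or> (U = Vsp m \<and> W = Vsp m))"

definition maps_partition :: "((nat \<Rightarrow> bool) \<Rightarrow> (nat \<Rightarrow> bool)) \<Rightarrow> (nat \<Rightarrow> bool) set set
                               \<Rightarrow> (nat \<Rightarrow> bool) set set \<Rightarrow> bool" where
  "maps_partition f A B \<longleftrightarrow> (\<lambda>X. f ` X) ` A = B"

definition trivial_partition :: "nat \<Rightarrow> (nat \<Rightarrow> bool) set set \<Rightarrow> bool" where
  "trivial_partition n P \<longleftrightarrow> P = (\<lambda>v. {v}) ` Vsp n \<or> P = {Vsp n}"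

definition linpart :: "nat \<Rightarrow> (nat \<Rightarrow> bool) set \<Rightarrow> (nat \<Rightarrow> bool) set set" where
  "linpart n W = {coset2 W v | v. v \<in> Vsp n}"

definition LA :: "(nat \<Rightarrow> bool) set \<Rightarrow> (nat \<Rightarrow> bool) set \<Rightarrow> (nat \<Rightarrow> bool) set
                 \<Rightarrow> (nat \<Rightarrow> bool) \<Rightarrow> (nat \<Rightarrow> bool) set set" where
  "LA U W1 W2 vbar = {coset2 W1 v | v. v \<in> U} \<union> {coset2 (coset2 W2 vbar) v | v. v \<in> U}"

end

theory Submission
  imports Defs
begin


lemma vadd_comm: "vadd u v = vadd v u" by (auto simp: vadd_def fun_eq_iff)
lemma vadd_assoc: "vadd (vadd u v) w = vadd u (vadd v w)" by (auto simp: vadd_def fun_eq_iff)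
lemma vadd_self[simp]: "vadd v v = vzero" by (auto simp: vadd_def vzero_def fun_eq_iff)
lemma vadd_zero[simp]: "vadd v vzero = v" "vadd vzero v = v" by (auto simp: vadd_def vzero_def fun_eq_iff)
lemma vadd_cancel[simp]: "vadd (vadd u v) v = u" "vadd v (vadd v u) = u" "vadd (vadd v u) v = u" "vadd v (vadd u v) = u"
  by (auto simp: vadd_def fun_eq_iff)
lemma vadd_left_cancel[simp]: "vadd u v = vadd u w \<longleftrightarrow> v = w"
  by (auto simp: vadd_def fun_eq_iff)
lemma vadd_right_cancel[simp]: "vadd v u = vadd w u \<longleftrightarrow> v = w"
  by (auto simp: vadd_def fun_eq_iff)
lemma vadd_eq_zero[simp]: "vadd u v = vzero \<longleftrightarrow> u = v"
  by (auto simp: vadd_def vzero_def fun_eq_iff)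
lemma Vsp_vadd: "u \<in> Vsp k \<Longrightarrow> v \<in> Vsp k \<Longrightarrow> vadd u v \<in> Vsp k"
  by (auto simp: Vsp_def vadd_def)
lemma Vsp_zero[simp]: "vzero \<in> Vsp k" by (auto simp: Vsp_def vzero_def)

lemma Vsp_eq_image: "Vsp k = (\<lambda>S i. i \<in> S) ` Pow {0..<k}"
proof
  show "Vsp k \<subseteq> (\<lambda>S i. i \<in> S) ` Pow {0..<k}"
  proof
    fix v assume "v \<in> Vsp k"
    then have "{i. v i} \<subseteq> {0..<k}" "v = (\<lambda>i. i \<in> {i. v i})"
      by (auto simp: Vsp_def) (meson not_le)
    then show "v \<in> (\<lambda>S i. i \<in> S) ` Pow {0..<k}" by blast
  qed
qed (auto simp: Vsp_def)

lemma card_Vsp: "card (Vsp k) = 2 ^ k"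
proof -
  have "inj_on (\<lambda>S i. i \<in> S) (Pow {0..<k})"
    by (rule inj_onI) (auto simp: fun_eq_iff)
  then show ?thesis unfolding Vsp_eq_image by (simp add: card_image card_Pow)
qed

lemma finite_Vsp[simp]: "finite (Vsp k)"
  unfolding Vsp_eq_image by simp

lemma subspace_card_pow: "subspace2 k S \<Longrightarrow> \<exists>d. card S = 2 ^ d"
proof (induction k arbitrary: S)
  case 0
  have "Vsp 0 = {vzero}" by (auto simp: Vsp_def vzero_def fun_eq_iff)
  then have "S = {vzero}" using 0 by (auto simp: subspace2_def)
  then show ?case by (intro exI[of _ 0]) simp
next
  case (Suc k)
  define S' where "S' = {v\<in>S. \<not> v k}"
  have sub': "subspace2 k S'"
    using Suc.prems unfolding subspace2_def S'_def Vsp_def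
    apply (auto simp: vzero_def vadd_def)
    by (metis Suc_leI le_neq_implies_less subsetD mem_Collect_eq)
  obtain d where d: "card S' = 2^d" using Suc.IH[OF sub'] by blast
  have finS': "finite S'" using sub' finite_subset[of S' "Vsp k"] by (auto simp: subspace2_def)
  show ?case
  proof (cases "\<exists>a\<in>S. a k")
    case False then have "S = S'" by (auto simp: S'_def)
    then show ?thesis using d by auto
  next
    case True then obtain a where a: "a\<in>S" "a k" by blast
    have cl: "\<And>u v. u \<in> S \<Longrightarrow> v \<in> S \<Longrightarrow> vadd u v \<in> S" using Suc.prems by (auto simp: subspace2_def)
    have "S = S' \<union> (\<lambda>v. vadd v a) ` S'"
    proof
      show "S \<subseteq> S' \<union> (\<lambda>v. vadd v a) ` S'"
      proof
        fix v assume v: "v \<in> S"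
        show "v \<in> S' \<union> (\<lambda>v. vadd v a) ` S'"
        proof (cases "v k")
          case True
          have "vadd v a \<in> S'" using cl[OF v a(1)] True a(2) by (auto simp: S'_def vadd_def)
          moreover have "v = vadd (vadd v a) a" by simp
          ultimately show ?thesis by blast
        qed (use v in \<open>auto simp: S'_def\<close>)
      qed
    next
      show "S' \<union> (\<lambda>v. vadd v a) ` S' \<subseteq> S" using cl a by (auto simp: S'_def)
    qed
    moreover have "S' \<inter> (\<lambda>v. vadd v a) ` S' = {}" using a(2) by (auto simp: S'_def vadd_def)
    moreover have "card ((\<lambda>v. vadd v a) ` S') = card S'"
      by (rule card_image) (auto intro: inj_onI)
    ultimately have "card S = 2 ^ Suc d" using finS' d by (simp add: card_Un_disjoint)
    then show ?thesis by blast
  qed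
qed

lemma dim2_eq: "card S = 2 ^ d \<Longrightarrow> dim2 S = d"
  unfolding dim2_def by (rule the_equality) auto

lemma subspace_card_dim: "subspace2 k S \<Longrightarrow> card S = 2 ^ dim2 S"
  using subspace_card_pow dim2_eq by metis

lemma subspace_finite: "subspace2 k S \<Longrightarrow> finite S"
  unfolding subspace2_def using finite_subset finite_Vsp by blast

lemma coset_self: "subspace2 k S \<Longrightarrow> s \<in> S \<Longrightarrow> coset2 S s = S"
  unfolding coset2_def subspace2_def
  by (auto simp: image_iff) (metis vadd_cancel(1))

lemma card_coset: "card (coset2 S s) = card S"
  unfolding coset2_def by (rule card_image) (auto intro: inj_onI)


definition emb :: "nat \<Rightarrow> nat \<Rightarrow> (nat \<Rightarrow> bool) \<Rightarrow> (nat \<Rightarrow> bool)" where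
  "emb m i x = (\<lambda>k. if k div m = i then x (k mod m) else False)"

lemma blk_Vsp[simp]: "blk m i v \<in> Vsp m" by (auto simp: blk_def Vsp_def)
lemma blk_vadd: "blk m i (vadd u v) = vadd (blk m i u) (blk m i v)"
  by (auto simp: blk_def vadd_def fun_eq_iff)
lemma blk_zero[simp]: "blk m i vzero = vzero" by (auto simp: blk_def vzero_def fun_eq_iff)

lemma Vsp_ext:
  assumes "0 < m" "u \<in> Vsp (m*b)" "v \<in> Vsp (m*b)" "\<forall>i<b. blk m i u = blk m i v"
  shows "u = v"
proof
  fix k show "u k = v k"
  proof (cases "k < m*b")
    case True
    define i where "i = k div m"
    define j where "j = k mod m"
    have ib: "i < b" using True assms(1) by (simp add: i_def less_mult_imp_div_less mult.commute)
    have jm: "j < m" using assms(1) by (simp add: j_def)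
    have k: "k = i*m + j" by (simp add: i_def j_def)
    have "blk m i u j = blk m i v j" using assms(4) ib by simp
    then show ?thesis using jm k by (simp add: blk_def)
  next
    case False then show ?thesis using assms(2,3) by (auto simp: Vsp_def)
  qed
qed

lemma emb_Vsp: "0 < m \<Longrightarrow> i < b \<Longrightarrow> emb m i x \<in> Vsp (m*b)"
proof -
  assume m: "0 < m" and i: "i < b"
  { fix k assume "m*b \<le> k"
    then have "b \<le> k div m" using m by (metis div_le_mono div_mult_self1_is_m mult.commute less_not_refl)
    then have "k div m \<noteq> i" using i by simp }
  then show ?thesis unfolding Vsp_def emb_def by auto
qed

lemma blk_emb: "0 < m \<Longrightarrow> x \<in> Vsp m \<Longrightarrow> blk m j (emb m i x) = (if j = i then x else vzero)"
proof
  assume m: "0 < m" and x: "x \<in> Vsp m"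
  fix j' show "blk m j (emb m i x) j' = (if j = i then x else vzero) j'"
  proof (cases "j' < m")
    case True
    then have "(j*m+j') div m = j" "(j*m+j') mod m = j'" by simp_all
    then show ?thesis using True by (simp add: blk_def emb_def vzero_def)
  next
    case False then show ?thesis using x by (simp add: blk_def Vsp_def vzero_def)
  qed
qed

lemma emb_vadd: "emb m i (vadd x y) = vadd (emb m i x) (emb m i y)"
  by (auto simp: emb_def vadd_def fun_eq_iff)
lemma emb_zero[simp]: "emb m i vzero = vzero"
  by (auto simp: emb_def vzero_def fun_eq_iff)
lemma emb_inj: "0 < m \<Longrightarrow> x \<in> Vsp m \<Longrightarrow> y \<in> Vsp m \<Longrightarrow> emb m i x = emb m i y \<Longrightarrow> x = y"
  by (metis blk_emb)

lemma parmap_Vsp[simp]: "parmap m b g v \<in> Vsp (m*b)"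
  by (auto simp: parmap_def Vsp_def)

lemma blk_parmap:
  assumes "0 < m" "i < b" "g i (blk m i v) \<in> Vsp m"
  shows "blk m i (parmap m b g v) = g i (blk m i v)"
proof
  fix j show "blk m i (parmap m b g v) j = g i (blk m i v) j"
  proof (cases "j < m")
    case True
    have "i*m + j < m*b"
    proof -
      have "i*m + j < (i+1)*m" using True by simp
      also have "\<dots> \<le> b*m" using assms(2) by (intro mult_right_mono) auto
      finally show ?thesis by (simp add: mult.commute)
    qed
    then show ?thesis using True by (simp add: blk_def parmap_def)
  next
    case False then show ?thesis using assms(3) by (auto simp: blk_def Vsp_def)
  qed
qed


lemma fiber_card:
  assumes "finite A" "\<forall>c\<in>f ` A. card {x\<in>A. f x = c} \<le> K"
  shows "card A \<le> K * card (f ` A)"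
proof -
  have e: "A = (\<Union>c\<in>f ` A. {x\<in>A. f x = c})" by blast
  have "card (\<Union>c\<in>f ` A. {x\<in>A. f x = c}) \<le> (\<Sum>c\<in>f ` A. card {x\<in>A. f x = c})"
    by (rule card_UN_le) (use assms(1) in simp)
  then have "card A \<le> (\<Sum>c\<in>f ` A. card {x\<in>A. f x = c})"
    using e by simp
  also have "\<dots> \<le> (\<Sum>c\<in>f ` A. K)" using assms(2) by (intro sum_mono) auto
  finally show ?thesis by (simp add: mult.commute)
qed

lemma diff_bound:
  assumes "diff_uniform m f \<delta>" "a \<in> Vsp m" "a \<noteq> vzero" "c \<in> Vsp m"
  shows "card {x \<in> Vsp m. vadd (f (vadd x a)) (f x) = c} \<le> \<delta>"
proof -
  let ?S = "{card {x \<in> Vsp m. vadd (f (vadd x a)) (f x) = c} | a c. a \<in> Vsp m \<and> a \<noteq> vzero \<and> c \<in> Vsp m}"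
  have "?S \<subseteq> (\<lambda>(a,c). card {x \<in> Vsp m. vadd (f (vadd x a)) (f x) = c}) ` (Vsp m \<times> Vsp m)"
    by auto
  then have "finite ?S" by (rule finite_subset) simp
  moreover have "card {x \<in> Vsp m. vadd (f (vadd x a)) (f x) = c} \<in> ?S" using assms by blast
  ultimately show ?thesis using assms(1) unfolding diff_uniform_def by simp
qed

lemma trunc_step:
  assumes "0 < m"
  shows "(\<lambda>k. if k < Suc t * m then v k else False) =
         vadd (\<lambda>k. if k < t * m then v k else False) (emb m t (blk m t v))"
proof
  fix k
  show "(if k < Suc t * m then v k else False) =
         vadd (\<lambda>k. if k < t * m then v k else False) (emb m t (blk m t v)) k"
  proof (cases "k < t*m")
    case True
    then have "k div m < t" using assms by (simp add: div_less_iff_less_mult)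
    then show ?thesis using True by (simp add: vadd_def emb_def)
  next
    case False
    then have t: "t \<le> k div m" using assms by (simp add: less_eq_div_iff_mult_less_eq)
    show ?thesis
    proof (cases "k < Suc t * m")
      case True
      then have "k div m < Suc t" using assms by (simp add: div_less_iff_less_mult)
      then have kd: "k div m = t" using t by simp
      have "t * m + k mod m = k" using kd by (metis div_mult_mod_eq)
      then show ?thesis using True False kd assms by (simp add: vadd_def emb_def blk_def)
    next
      case False2: False
      then have "Suc t \<le> k div m" using assms by (simp add: less_eq_div_iff_mult_less_eq)
      then show ?thesis using False False2 by (simp add: vadd_def emb_def)
    qed
  qed
qed


lemma coset_eq_sub:
  assumes "vzero \<in> S" "\<forall>x\<in>T. \<forall>y\<in>T. vadd x y \<in> T" "coset2 S a = coset2 T c"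
  shows "S \<subseteq> T"
proof
  fix x assume x: "x \<in> S"
  have "vadd x a \<in> coset2 T c" using assms(3) x unfolding coset2_def by blast
  then obtain y where y: "y \<in> T" "vadd x a = vadd y c" unfolding coset2_def by blast
  have "vadd vzero a \<in> coset2 T c" using assms(1,3) unfolding coset2_def by blast
  then obtain y0 where y0: "y0 \<in> T" "vadd vzero a = vadd y0 c" unfolding coset2_def by blast
  have "x = vadd y y0" using y(2) y0(2) by (auto simp: vadd_def vzero_def fun_eq_iff)
  then show "x \<in> T" using assms(2) y(1) y0(1) by simp
qed



theorem lemma3p8:
  fixes m b r :: nat
    and g :: "nat \<Rightarrow> (nat \<Rightarrow> bool) \<Rightarrow> (nat \<Rightarrow> bool)"
    and W U W1 W2 :: "(nat \<Rightarrow> bool) set"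
    and vbar :: "nat \<Rightarrow> bool"
  assumes "1 < m" and "1 < b"
    and perm: "\<forall>i < b. bij_betw (g i) (Vsp m) (Vsp m)"
    and zero: "parmap m b g vzero = vzero"
    and r: "r < m - 1"
    and du: "\<forall>i < b. diff_uniform m (g i) (2 ^ r)"
    and sai: "\<forall>i < b. strongly_anti_invariant m r (g i)"
    and W: "subspace2 (m * b) W"
    and U: "subspace2 (m * b) U" "dim2 U = m * b - 1"
    and W12: "subspace2 (m * b) W1" "subspace2 (m * b) W2" "W1 \<subseteq> U" "W2 \<subseteq> U"
    and vbar: "vbar \<in> Vsp (m * b) - U"
    and nontriv: "\<not> trivial_partition (m * b) (LA U W1 W2 vbar)"
    and maps: "maps_partition (parmap m b g) (linpart (m * b) W) (LA U W1 W2 vbar)"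
  shows "wall m b W \<and> wall m b W1 \<and> wall m b W2 \<and> W = W1 \<and> W1 = W2"
proof -
  define n where "n = m * b"
  define P where "P = parmap m b g"
  have m0: "0 < m" using assms(1) by simp
  have gV: "\<And>i x. i < b \<Longrightarrow> x \<in> Vsp m \<Longrightarrow> g i x \<in> Vsp m"
    using perm bij_betwE by blast
  have ginj: "\<And>i. i < b \<Longrightarrow> inj_on (g i) (Vsp m)"
    using perm by (simp add: bij_betw_def)
  have gimg: "\<And>i. i < b \<Longrightarrow> g i ` Vsp m = Vsp m"
    using perm by (simp add: bij_betw_def)
  have g0: "\<And>i. i < b \<Longrightarrow> g i vzero = vzero"
    using sai by (simp add: strongly_anti_invariant_def)
  have r1: "1 \<le> r" using sai assms(2) by (auto simp: strongly_anti_invariant_def)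
  have blkP: "\<And>i v. i < b \<Longrightarrow> blk m i (P v) = g i (blk m i v)"
    unfolding P_def using m0 gV blk_parmap blk_Vsp by blast
  have PV: "\<And>v. P v \<in> Vsp n" by (simp add: P_def n_def)
  have Pemb: "\<And>i x. i < b \<Longrightarrow> x \<in> Vsp m \<Longrightarrow> P (emb m i x) = emb m i (g i x)"
  proof -
    fix i x assume i: "i < b" and x: "x \<in> Vsp m"
    show "P (emb m i x) = emb m i (g i x)"
      apply (rule Vsp_ext[OF m0, of _ b])
      using i x PV emb_Vsp[OF m0 i] blkP blk_emb[OF m0] gV g0 by (auto simp: n_def)
  qed
  have Pinj: "inj_on P (Vsp n)"
  proof (rule inj_onI)
    fix u v assume u: "u \<in> Vsp n" and v: "v \<in> Vsp n" and e: "P u = P v"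
    show "u = v"
    proof (rule Vsp_ext[OF m0, of _ b])
      show "\<forall>i<b. blk m i u = blk m i v"
      proof (intro allI impI)
        fix i assume i: "i < b"
        have "g i (blk m i u) = g i (blk m i v)" using blkP[OF i] e by metis
        then show "blk m i u = blk m i v" using ginj[OF i] blk_Vsp by (meson inj_onD)
      qed
    qed (use u v n_def in auto)
  qed
  have Wsub: "W \<subseteq> Vsp n" and W0: "vzero \<in> W" and Wadd: "\<And>x y. x \<in> W \<Longrightarrow> y \<in> W \<Longrightarrow> vadd x y \<in> W"
    using W by (auto simp: subspace2_def n_def)
  have W1sub: "W1 \<subseteq> Vsp n" and W10: "vzero \<in> W1" and W1add: "\<And>x y. x \<in> W1 \<Longrightarrow> y \<in> W1 \<Longrightarrow> vadd x y \<in> W1"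
    using W12 by (auto simp: subspace2_def n_def)
  have W2sub: "W2 \<subseteq> Vsp n" and W20: "vzero \<in> W2" and W2add: "\<And>x y. x \<in> W2 \<Longrightarrow> y \<in> W2 \<Longrightarrow> vadd x y \<in> W2"
    using W12 by (auto simp: subspace2_def n_def)
  have Usub: "U \<subseteq> Vsp n" and U0: "vzero \<in> U" and Uadd: "\<And>x y. x \<in> U \<Longrightarrow> y \<in> U \<Longrightarrow> vadd x y \<in> U"
    using U by (auto simp: subspace2_def n_def)
  have maps': "(\<lambda>X. P ` X) ` linpart n W = LA U W1 W2 vbar"
    using maps by (simp add: maps_partition_def P_def n_def)
  have blkLA: "\<And>v. v \<in> Vsp n \<Longrightarrow> P ` coset2 W v \<in> LA U W1 W2 vbar"
    using maps' unfolding linpart_def by blast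
  have LAblk: "\<And>B. B \<in> LA U W1 W2 vbar \<Longrightarrow> \<exists>v\<in>Vsp n. B = P ` coset2 W v"
    using maps' unfolding linpart_def by blast
  have vbarU: "vbar \<notin> U" "vbar \<in> Vsp n" using vbar by (auto simp: n_def)
  have SB: "\<And>v w. v \<in> Vsp n \<Longrightarrow> w \<in> W \<Longrightarrow> P v \<in> U \<Longrightarrow> vadd (P (vadd v w)) (P v) \<in> W1"
  proof -
    fix v w assume v: "v \<in> Vsp n" and w: "w \<in> W" and PvU: "P v \<in> U"
    have B: "P ` coset2 W v \<in> LA U W1 W2 vbar" using blkLA[OF v] .
    have i1: "P v \<in> P ` coset2 W v" using W0 unfolding coset2_def by force
    have i2: "P (vadd v w) \<in> P ` coset2 W v" using w unfolding coset2_def by (force simp: vadd_comm)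
    from B consider (a) u where "u \<in> U" "P ` coset2 W v = coset2 W1 u"
      | (b) u where "u \<in> U" "P ` coset2 W v = coset2 (coset2 W2 vbar) u"
      unfolding LA_def by blast
    then show "vadd (P (vadd v w)) (P v) \<in> W1"
    proof cases
      case a
      obtain x1 where x1: "x1 \<in> W1" "P v = vadd x1 u" using i1 a unfolding coset2_def by auto
      obtain x2 where x2: "x2 \<in> W1" "P (vadd v w) = vadd x2 u" using i2 a unfolding coset2_def by auto
      have "vadd (P (vadd v w)) (P v) = vadd x2 x1" using x1 x2 by (auto simp: vadd_def fun_eq_iff)
      then show ?thesis using W1add x1 x2 by simp
    next
      case b
      obtain x1 where x1: "x1 \<in> W2" "P v = vadd (vadd x1 vbar) u" using i1 b unfolding coset2_def by auto
      have "vbar = vadd (P v) (vadd x1 u)" using x1 by (auto simp: vadd_def fun_eq_iff)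
      moreover have x1U: "vadd x1 u \<in> U" using Uadd x1(1) b(1) W12(4) by blast
      ultimately have "vbar \<in> U" using Uadd[OF PvU x1U] by simp
      then show ?thesis using vbarU by simp
    qed
  qed
  have PW: "P ` W = W1"
  proof -
    have cW: "coset2 W vzero = W" by (simp add: coset2_def)
    have B: "P ` W \<in> LA U W1 W2 vbar" using blkLA[of vzero] cW by simp
    have i1: "vzero \<in> P ` W" using W0 zero by (force simp: P_def)
    from B consider (a) u where "u \<in> U" "P ` W = coset2 W1 u"
      | (b) u where "u \<in> U" "P ` W = coset2 (coset2 W2 vbar) u"
      unfolding LA_def by blast
    then show ?thesis
    proof cases
      case a
      obtain x1 where x1: "x1 \<in> W1" "vzero = vadd x1 u" using i1 a unfolding coset2_def by auto
      then have "u = x1" by (metis vadd_eq_zero)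
      then show ?thesis using a coset_self[OF W12(1)] x1 by simp
    next
      case b
      obtain x1 where x1: "x1 \<in> W2" "vzero = vadd (vadd x1 vbar) u" using i1 b unfolding coset2_def by auto
      have "vbar = vadd x1 u" using x1 by (auto simp: vadd_def vzero_def fun_eq_iff)
      moreover have x1U: "vadd x1 u \<in> U" using Uadd x1(1) b(1) W12(4) by blast
      ultimately have "vbar \<in> U" by simp
      then show ?thesis using vbarU by simp
    qed
  qed
  have n1: "1 \<le> n" using assms(1,2) by (simp add: n_def)
  have cardU: "card U = 2 ^ (n - 1)" using subspace_card_dim[OF U(1)] U(2) by (simp add: n_def)
  have index2: "\<And>e y. e \<in> Vsp n \<Longrightarrow> e \<notin> U \<Longrightarrow> y \<in> Vsp n \<Longrightarrow> y \<notin> U \<Longrightarrow> vadd y e \<in> U"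
  proof (rule ccontr)
    fix e y assume e: "e \<in> Vsp n" "e \<notin> U" and y: "y \<in> Vsp n" "y \<notin> U" and ye: "vadd y e \<notin> U"
    have fU: "finite U" using subspace_finite[OF U(1)] .
    have d1: "U \<inter> coset2 U e = {}"
      unfolding coset2_def using e Uadd by (auto) (metis vadd_cancel(4))
    have d2: "y \<notin> U \<union> coset2 U e"
      using y ye unfolding coset2_def by auto
    have sub: "insert y (U \<union> coset2 U e) \<subseteq> Vsp n"
      using y e Usub Vsp_vadd unfolding coset2_def by auto
    have "card (insert y (U \<union> coset2 U e)) = 2 ^ (n-1) + 2 ^ (n-1) + 1"
      using d1 d2 fU cardU card_coset[of U e] by (simp add: card_Un_disjoint coset2_def)
    also have "\<dots> = 2 ^ n + 1" using n1 by (metis mult_2 power_Suc Suc_diff_1 less_le_trans zero_less_one le_less)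
    finally have "2 ^ n + 1 \<le> card (Vsp n)"
      by (metis card_mono[OF finite_Vsp sub])
    then show False by (simp add: card_Vsp)
  qed
  have Femb: "\<And>i x x' w. i < b \<Longrightarrow> x \<in> Vsp m \<Longrightarrow> x' \<in> Vsp m \<Longrightarrow> w \<in> Vsp n \<Longrightarrow>
      vadd (vadd (P (vadd (emb m i x) w)) (P (emb m i x))) (vadd (P (vadd (emb m i x') w)) (P (emb m i x')))
      = emb m i (vadd (vadd (g i (vadd x (blk m i w))) (g i x)) (vadd (g i (vadd x' (blk m i w))) (g i x')))"
  proof -
    fix i x x' w assume i: "i < b" and x: "x \<in> Vsp m" and x': "x' \<in> Vsp m" and w: "w \<in> Vsp n"
    have D: "vadd (vadd (g i (vadd x (blk m i w))) (g i x)) (vadd (g i (vadd x' (blk m i w))) (g i x')) \<in> Vsp m"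
      by (intro Vsp_vadd gV[OF i] x x' blk_Vsp)
    show "?thesis i x x' w"
    proof (rule Vsp_ext[OF m0, of _ b])
      show "\<forall>j<b. blk m j (vadd (vadd (P (vadd (emb m i x) w)) (P (emb m i x))) (vadd (P (vadd (emb m i x') w)) (P (emb m i x')))) =
          blk m j (emb m i (vadd (vadd (g i (vadd x (blk m i w))) (g i x)) (vadd (g i (vadd x' (blk m i w))) (g i x'))))"
        using D x x' g0 by (auto simp: blk_vadd blkP blk_emb[OF m0])
    qed (use emb_Vsp[OF m0 i] Vsp_vadd PV n_def in auto)
  qed
  have key: "\<And>i. i < b \<Longrightarrow> \<exists>w\<in>W. blk m i w \<noteq> vzero \<Longrightarrow> \<forall>x\<in>Vsp m. emb m i x \<in> W"
  proof -
    fix i assume i: "i < b" and ex: "\<exists>w\<in>W. blk m i w \<noteq> vzero"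
    obtain w where w: "w \<in> W" "blk m i w \<noteq> vzero" using ex by blast
    define a where "a = blk m i w"
    have a: "a \<in> Vsp m" "a \<noteq> vzero" using w by (auto simp: a_def)
    have wV: "w \<in> Vsp n" using w Wsub by auto
    define Wi where "Wi = {x\<in>Vsp m. emb m i x \<in> W}"
    define Xi where "Xi = {x\<in>Vsp m. emb m i x \<in> W1}"
    have sWi: "subspace2 m Wi" using W0 Wadd unfolding subspace2_def Wi_def by (auto simp: emb_vadd Vsp_vadd)
    have sXi: "subspace2 m Xi" using W10 W1add unfolding subspace2_def Xi_def by (auto simp: emb_vadd Vsp_vadd)
    have gWX: "g i ` Wi = Xi"
    proof
      show "g i ` Wi \<subseteq> Xi"
      proof
        fix y assume "y \<in> g i ` Wi"
        then obtain x where x: "x \<in> Vsp m" "emb m i x \<in> W" "y = g i x" unfolding Wi_def by auto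
        have "P (emb m i x) \<in> W1" using PW x by blast
        then show "y \<in> Xi" using Pemb[OF i x(1)] x gV[OF i] by (auto simp: Xi_def)
      qed
    next
      show "Xi \<subseteq> g i ` Wi"
      proof
        fix y assume y: "y \<in> Xi"
        then have "emb m i y \<in> P ` W" using PW by (auto simp: Xi_def)
        then obtain z where z: "z \<in> W" "emb m i y = P z" by auto
        have yV: "y \<in> Vsp m" using y by (auto simp: Xi_def)
        have bz: "\<And>j. j < b \<Longrightarrow> j \<noteq> i \<Longrightarrow> blk m j z = vzero"
        proof -
          fix j assume j: "j < b" "j \<noteq> i"
          have "g j (blk m j z) = g j vzero"
            using blkP[OF j(1), of z] z(2) blk_emb[OF m0 yV, of j i] j g0 by simp
          then show "blk m j z = vzero" using ginj[OF j(1)] by (auto dest: inj_onD)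
        qed
        have "g i (blk m i z) = y" using blkP[OF i, of z] z(2) blk_emb[OF m0 yV, of i i] by simp
        moreover have "z = emb m i (blk m i z)"
        proof (rule Vsp_ext[OF m0, of _ b])
          show "\<forall>j<b. blk m j z = blk m j (emb m i (blk m i z))"
            using bz blk_emb[OF m0 blk_Vsp] by auto
        qed (use z Wsub emb_Vsp[OF m0 i] n_def in auto)
        ultimately have "blk m i z \<in> Wi" "y = g i (blk m i z)" using z(1) unfolding Wi_def by auto
        then show "y \<in> g i ` Wi" by blast
      qed
    qed
    have saii: "(dim2 Wi = dim2 Xi \<and> dim2 Xi < m - r) \<or> (Wi = Vsp m \<and> Xi = Vsp m)"
      using sai i sWi sXi gWX unfolding strongly_anti_invariant_def by blast
    have cXi: "card Xi = 2 ^ dim2 Xi" using subspace_card_dim[OF sXi] .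
    have fXi: "finite Xi" using subspace_finite[OF sXi] .
    have duI: "\<And>a c. a \<in> Vsp m \<Longrightarrow> a \<noteq> vzero \<Longrightarrow> c \<in> Vsp m \<Longrightarrow>
        card {x \<in> Vsp m. vadd (g i (vadd x a)) (g i x) = c} \<le> 2 ^ r"
      using du i diff_bound by blast
    define D where "D = (\<lambda>x. vadd (g i (vadd x a)) (g i x))"
    have DV: "\<And>x. x \<in> Vsp m \<Longrightarrow> D x \<in> Vsp m" unfolding D_def by (intro Vsp_vadd gV[OF i] a(1))
    show "\<forall>x\<in>Vsp m. emb m i x \<in> W"
    proof (cases "\<forall>x\<in>Vsp m. emb m i x \<in> U")
      case True
      have F1: "\<And>x. x \<in> Vsp m \<Longrightarrow> vadd (P (vadd (emb m i x) w)) (P (emb m i x)) \<in> W1"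
      proof -
        fix x assume x: "x \<in> Vsp m"
        have "P (emb m i x) \<in> U" using Pemb[OF i x] True gV[OF i x] by simp
        then show "?thesis x" using SB[OF emb_Vsp[OF m0 i, folded n_def] w(1)] by blast
      qed
      have DX: "\<And>x. x \<in> Vsp m \<Longrightarrow> vadd (D x) (D vzero) \<in> Xi"
      proof -
        fix x assume x: "x \<in> Vsp m"
        have "emb m i (vadd (D x) (D vzero)) \<in> W1"
          using Femb[OF i x Vsp_zero wV] W1add[OF F1[OF x] F1[OF Vsp_zero]] by (simp add: D_def a_def)
        then show "vadd (D x) (D vzero) \<in> Xi" using DV x Vsp_vadd Vsp_zero unfolding Xi_def by blast
      qed
      have "D ` Vsp m \<subseteq> (\<lambda>y. vadd y (D vzero)) ` Xi"
      proof
        fix y assume "y \<in> D ` Vsp m"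
        then obtain x where "x \<in> Vsp m" "y = D x" by auto
        then show "y \<in> (\<lambda>y. vadd y (D vzero)) ` Xi" using DX by (metis image_eqI vadd_cancel(1))
      qed
      then have c1: "card (D ` Vsp m) \<le> card Xi"
        by (metis card_image_le card_mono fXi finite_imageI order_trans)
      have "card (Vsp m) \<le> 2 ^ r * card (D ` Vsp m)"
      proof (rule fiber_card[OF finite_Vsp], rule ballI)
        fix c assume "c \<in> D ` Vsp m"
        then have "c \<in> Vsp m" using DV by auto
        then show "card {x \<in> Vsp m. D x = c} \<le> 2 ^ r" using duI[OF a(1) a(2)] unfolding D_def by blast
      qed
      then have "2 ^ m \<le> 2 ^ r * card (D ` Vsp m)" using card_Vsp by simp
      also have "\<dots> \<le> 2 ^ r * card Xi" using c1 by simp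
      finally have "2 ^ m \<le> (2::nat) ^ (r + dim2 Xi)" using cXi by (simp add: power_add)
      then have "m \<le> r + dim2 Xi" by simp
      then have "Wi = Vsp m" using saii by auto
      then show ?thesis unfolding Wi_def by auto
    next
      case False
      then obtain x0 where x0: "x0 \<in> Vsp m" "emb m i x0 \<notin> U" by blast
      define H where "H = {x\<in>Vsp m. emb m i x \<in> U}"
      have cH: "2 ^ m \<le> 2 * card H"
      proof -
        have "vadd x0 ` (Vsp m - H) \<subseteq> H"
        proof
          fix y assume "y \<in> vadd x0 ` (Vsp m - H)"
          then obtain x where x: "x \<in> Vsp m" "emb m i x \<notin> U" "y = vadd x0 x" unfolding H_def by auto
          have "vadd (emb m i x) (emb m i x0) \<in> U"
            using index2[OF emb_Vsp[OF m0 i, folded n_def] x0(2) emb_Vsp[OF m0 i, folded n_def] x(2)] .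
          moreover have "vadd (emb m i x) (emb m i x0) = emb m i y" using x(3) by (simp add: emb_vadd vadd_comm)
          moreover have "y \<in> Vsp m" using x(1) x0(1) x(3) Vsp_vadd by simp
          ultimately show "y \<in> H" by (simp add: H_def)
        qed
        moreover have "inj_on (vadd x0) (Vsp m - H)" by (auto intro: inj_onI)
        moreover have Hs: "H \<subseteq> Vsp m" by (auto simp: H_def)
        moreover have fH: "finite H" using finite_subset[OF Hs finite_Vsp] .
        ultimately have "card (Vsp m - H) \<le> card H"
          by (intro card_inj_on_le) auto
        moreover have "card (Vsp m) = card H + card (Vsp m - H)"
          using card_Diff_subset[OF fH Hs] card_mono[OF finite_Vsp Hs] by simp
        ultimately show ?thesis using card_Vsp by simp
      qed
      define A where "A = {x\<in>Vsp m. g i x \<in> H}"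
      have cA: "card A = card H"
      proof -
        have "g i ` A = H" using gimg[OF i] unfolding A_def H_def by auto
        moreover have "inj_on (g i) A" using ginj[OF i] unfolding A_def by (auto intro: inj_on_subset)
        ultimately show ?thesis using card_image[of "g i" A] by simp
      qed
      have finA: "finite A" unfolding A_def by simp
      have AU: "\<And>x. x \<in> A \<Longrightarrow> P (emb m i x) \<in> U" using Pemb[OF i] unfolding A_def H_def by auto
      have AV: "\<And>x. x \<in> A \<Longrightarrow> x \<in> Vsp m" unfolding A_def by auto
      have Wi0: "\<forall>a'\<in>Wi. a' = vzero"
      proof (rule ccontr)
        assume "\<not> (\<forall>a'\<in>Wi. a' = vzero)"
        then obtain a' where a': "a' \<in> Vsp m" "emb m i a' \<in> W" "a' \<noteq> vzero" unfolding Wi_def by auto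
        define D' where "D' = (\<lambda>x. vadd (g i (vadd x a')) (g i x))"
        have D'X: "D' ` A \<subseteq> Xi - {vzero}"
        proof
          fix y assume "y \<in> D' ` A"
          then obtain x where x: "x \<in> A" "y = D' x" by auto
          have xV: "x \<in> Vsp m" using AV x(1) .
          have "vadd (P (vadd (emb m i x) (emb m i a'))) (P (emb m i x)) \<in> W1"
            using SB[OF emb_Vsp[OF m0 i, folded n_def] a'(2) AU[OF x(1)]] .
          moreover have "P (vadd (emb m i x) (emb m i a')) = emb m i (g i (vadd x a'))"
            using Pemb[OF i Vsp_vadd[OF xV a'(1)]] by (simp add: emb_vadd)
          moreover have "P (emb m i x) = emb m i (g i x)" using Pemb[OF i xV] .
          ultimately have "emb m i (D' x) \<in> W1"
            by (simp add: emb_vadd[symmetric] D'_def)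
          moreover have "D' x \<in> Vsp m" unfolding D'_def by (intro Vsp_vadd gV[OF i] a'(1) xV)
          moreover have "D' x \<noteq> vzero"
          proof
            assume "D' x = vzero"
            then have "g i (vadd x a') = g i x" by (simp add: D'_def)
            then have "vadd x a' = x" using ginj[OF i] xV a' Vsp_vadd by (meson inj_onD)
            then have "vadd x a' = vadd x vzero" by simp
            then show False using a'(3) by (simp only: vadd_left_cancel)
          qed
          ultimately show "y \<in> Xi - {vzero}" using x by (auto simp: Xi_def)
        qed
        have "card A \<le> 2 ^ r * card (D' ` A)"
        proof (rule fiber_card[OF finA], rule ballI)
          fix c assume c: "c \<in> D' ` A"
          have "{x \<in> A. D' x = c} \<subseteq> {x \<in> Vsp m. vadd (g i (vadd x a')) (g i x) = c}"
            using AV unfolding D'_def by auto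
          moreover have "c \<in> Vsp m" using c D'X sXi by (auto simp: subspace2_def)
          ultimately show "card {x \<in> A. D' x = c} \<le> 2 ^ r"
            using order_trans[OF card_mono duI[OF a'(1) a'(3)]] by simp
        qed
        also have "\<dots> \<le> 2 ^ r * (card Xi - 1)"
          using card_mono[OF _ D'X] fXi sXi by (simp add: subspace2_def card_Diff_singleton)
        finally have c2: "card A \<le> 2 ^ r * (2 ^ dim2 Xi - 1)" using cXi by simp
        have "x0 \<notin> Xi" using x0 W12(3) by (auto simp: Xi_def)
        then have "dim2 Xi < m - r" using saii x0 by auto
        then have dle: "Suc (r + dim2 Xi) \<le> m" by linarith
        have "(2::nat) ^ r * (2 ^ dim2 Xi - 1) < 2 ^ r * 2 ^ dim2 Xi" by simp
        then have "card A < 2 ^ r * 2 ^ dim2 Xi" using c2 by linarith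
        then have "2 * card A < 2 ^ Suc (r + dim2 Xi)" by (simp add: power_add)
        also have "\<dots> \<le> 2 ^ m" using dle by (rule power_increasing) simp
        finally show False using cH cA by simp
      qed
      have Xi0: "\<forall>y\<in>Xi. y = vzero" using gWX Wi0 g0[OF i] by auto
      have "A \<noteq> {}" using cH cA by (auto simp: card_eq_0_iff) 
      then obtain x' where x': "x' \<in> A" by blast
      have F1: "\<And>x. x \<in> A \<Longrightarrow> vadd (P (vadd (emb m i x) w)) (P (emb m i x)) \<in> W1"
        using SB[OF emb_Vsp[OF m0 i, folded n_def] w(1) AU] .
      have "A \<subseteq> {x \<in> Vsp m. vadd (g i (vadd x a)) (g i x) = D x'}"
      proof
        fix x assume x: "x \<in> A"
        have "emb m i (vadd (D x) (D x')) \<in> W1"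
          using Femb[OF i AV[OF x] AV[OF x'] wV] W1add[OF F1[OF x] F1[OF x']] by (simp add: D_def a_def)
        then have "vadd (D x) (D x') \<in> Xi" using Vsp_vadd[OF DV[OF AV[OF x]] DV[OF AV[OF x']]] unfolding Xi_def by blast
        then have "vadd (D x) (D x') = vzero" using Xi0 by blast
        then have "D x = D x'" by simp
        then show "x \<in> {x \<in> Vsp m. vadd (g i (vadd x a)) (g i x) = D x'}" using AV[OF x] by (simp add: D_def)
      qed
      then have "card A \<le> 2 ^ r" using order_trans[OF card_mono duI[OF a DV[OF AV[OF x']]]] by simp
      then have "(2::nat) ^ m \<le> 2 ^ Suc r" using cH cA by simp
      then have "m \<le> Suc r" using power_le_imp_le_exp[of "2::nat" m "Suc r"] by simp
      then show ?thesis using r by simp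
    qed
  qed
  define I where "I = {i. i < b \<and> (\<exists>w\<in>W. blk m i w \<noteq> vzero)}"
  define WS where "WS = {v \<in> Vsp (m * b). \<forall>k<m * b. k div m \<notin> I \<longrightarrow> \<not> v k}"
  have memWS: "\<And>y. y \<in> Vsp n \<Longrightarrow> y \<in> WS \<longleftrightarrow> (\<forall>j<b. j \<notin> I \<longrightarrow> blk m j y = vzero)"
  proof
    fix y assume y: "y \<in> Vsp n" "y \<in> WS"
    show "\<forall>j<b. j \<notin> I \<longrightarrow> blk m j y = vzero"
    proof (intro allI impI)
      fix j assume j: "j < b" "j \<notin> I"
      show "blk m j y = vzero"
      proof
        fix j' show "blk m j y j' = vzero j'"
        proof (cases "j' < m")
          case True
          have "j*m + j' < (j+1)*m" using True by simp
          also have "\<dots> \<le> b*m" using j(1) by (intro mult_right_mono) auto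
          finally have "j*m + j' < m*b" by (simp add: mult.commute)
          moreover have "(j*m + j') div m = j" using True by simp
          ultimately have "\<not> y (j*m + j')" using y(2) j(2) unfolding WS_def by auto
          then show ?thesis using True by (simp add: blk_def vzero_def)
        next
          case False then show ?thesis by (simp add: blk_def vzero_def)
        qed
      qed
    qed
  next
    fix y assume y: "y \<in> Vsp n" and h: "\<forall>j<b. j \<notin> I \<longrightarrow> blk m j y = vzero"
    show "y \<in> WS" unfolding WS_def
    proof (intro CollectI conjI allI impI)
      show "y \<in> Vsp (m*b)" using y n_def by simp
      fix k assume k: "k < m*b" "k div m \<notin> I"
      have jb: "k div m < b" using k(1) m0 by (simp add: div_less_iff_less_mult mult.commute)
      have "blk m (k div m) y (k mod m) = y k" using m0 by (simp add: blk_def)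
      then show "\<not> y k" using h jb k(2) by (simp add: vzero_def)
    qed
  qed
  have WWS: "W = WS"
  proof
    show "W \<subseteq> WS"
    proof
      fix v assume v: "v \<in> W"
      then have vV: "v \<in> Vsp n" using Wsub by auto
      show "v \<in> WS" using memWS[OF vV] v unfolding I_def by auto
    qed
  next
    show "WS \<subseteq> W"
    proof
      fix v assume v: "v \<in> WS"
      then have vV: "v \<in> Vsp n" unfolding WS_def n_def by auto
      have bl: "\<And>t. t < b \<Longrightarrow> emb m t (blk m t v) \<in> W"
      proof -
        fix t assume t: "t < b"
        show "emb m t (blk m t v) \<in> W"
        proof (cases "t \<in> I")
          case True then show ?thesis using key[OF t] blk_Vsp unfolding I_def by blast
        next
          case False then have "blk m t v = vzero" using memWS[OF vV] v t by auto
          then show ?thesis using W0 by simp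
        qed
      qed
      have "\<forall>t. t \<le> b \<longrightarrow> (\<lambda>k. if k < t * m then v k else False) \<in> W"
      proof (intro allI)
        fix t show "t \<le> b \<longrightarrow> (\<lambda>k. if k < t * m then v k else False) \<in> W"
        proof (induction t)
          case 0
          have "(\<lambda>k. if k < 0 * m then v k else False) = vzero" by (simp add: vzero_def)
          then show ?case using W0 by simp
        next
          case (Suc t)
          show ?case
          proof
            assume "Suc t \<le> b"
            then have "t < b" "t \<le> b" by simp_all
            then show "(\<lambda>k. if k < Suc t * m then v k else False) \<in> W"
              using trunc_step[OF m0, of t v] Wadd Suc.IH bl by simp
          qed
        qed
      qed
      then have "(\<lambda>k. if k < b * m then v k else False) \<in> W" by simp
      moreover have "(\<lambda>k. if k < b * m then v k else False) = v"
        using vV unfolding Vsp_def n_def by (auto simp: fun_eq_iff mult.commute)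
      ultimately show "v \<in> W" by simp
    qed
  qed
  have PWW: "P ` W = W"
  proof (rule card_subset_eq)
    show "finite W" using subspace_finite[OF W] .
    show "P ` W \<subseteq> W"
    proof
      fix y assume "y \<in> P ` W"
      then obtain w where w: "w \<in> W" "y = P w" by auto
      have wV: "w \<in> Vsp n" using w Wsub by auto
      have "\<forall>j<b. j \<notin> I \<longrightarrow> blk m j w = vzero" using memWS[OF wV] w WWS by auto
      then have "\<forall>j<b. j \<notin> I \<longrightarrow> blk m j (P w) = vzero" using blkP g0 by simp
      then show "y \<in> W" using memWS[OF PV] w WWS by simp
    qed
    show "card (P ` W) = card W" using card_image inj_on_subset[OF Pinj Wsub] by blast
  qed
  have W1W: "W1 = W" using PW PWW by simp
  have W2W: "W2 = W"
  proof -
    have "coset2 (coset2 W2 vbar) vzero \<in> LA U W1 W2 vbar" unfolding LA_def using U0 by blast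
    then obtain v where v: "v \<in> Vsp n" "coset2 (coset2 W2 vbar) vzero = P ` coset2 W v" using LAblk by blast
    have cs: "coset2 W v \<subseteq> Vsp n" using Wsub v(1) Vsp_vadd unfolding coset2_def by auto
    have "P ` coset2 W v = coset2 W (P v)"
    proof (rule card_subset_eq)
      show "finite (coset2 W (P v))" unfolding coset2_def using subspace_finite[OF W] by simp
      show "P ` coset2 W v \<subseteq> coset2 W (P v)"
      proof
        fix y assume "y \<in> P ` coset2 W v"
        then obtain w where w: "w \<in> W" "y = P (vadd w v)" unfolding coset2_def by auto
        have wV: "w \<in> Vsp n" using w Wsub by auto
        have bw: "\<forall>j<b. j \<notin> I \<longrightarrow> blk m j w = vzero" using memWS[OF wV] w WWS by auto
        have "\<forall>j<b. j \<notin> I \<longrightarrow> blk m j (vadd (P (vadd w v)) (P v)) = vzero"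
          using bw blkP by (simp add: blk_vadd)
        then have "vadd (P (vadd w v)) (P v) \<in> W" using memWS[OF Vsp_vadd[OF PV PV]] WWS by simp
        moreover have "y = vadd (vadd (P (vadd w v)) (P v)) (P v)" using w by simp
        ultimately show "y \<in> coset2 W (P v)" unfolding coset2_def by blast
      qed
      show "card (P ` coset2 W v) = card (coset2 W (P v))"
        using card_image[OF inj_on_subset[OF Pinj cs]] card_coset by simp
    qed
    then have ce: "coset2 W2 vbar = coset2 W (P v)" using v(2) by (simp add: coset2_def)
    have "W2 \<subseteq> W" by (rule coset_eq_sub[OF W20 _ ce]) (use Wadd in blast)
    moreover have "W \<subseteq> W2" by (rule coset_eq_sub[OF W0 _ ce[symmetric]]) (use W2add in blast)
    ultimately show ?thesis by blast
  qed
  have Ine: "I \<noteq> {}"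
  proof
    assume I0: "I = {}"
    have "WS = {vzero}"
    proof
      show "WS \<subseteq> {vzero}" unfolding WS_def I0 Vsp_def vzero_def by (auto simp: fun_eq_iff) (meson not_le)
    qed (use W0 WWS in auto)
    then have W0': "W = {vzero}" "W1 = {vzero}" "W2 = {vzero}" using WWS W1W W2W by auto
    have cs: "\<And>a u. coset2 {a} u = {vadd a u}" by (simp add: coset2_def)
    have "LA U W1 W2 vbar = (\<lambda>v. {v}) ` Vsp (m * b)"
    proof
      show "LA U W1 W2 vbar \<subseteq> (\<lambda>v. {v}) ` Vsp (m * b)"
        unfolding LA_def W0' using Usub vbarU Vsp_vadd n_def by (auto simp: cs)
    next
      show "(\<lambda>v. {v}) ` Vsp (m * b) \<subseteq> LA U W1 W2 vbar"
      proof
        fix B assume "B \<in> (\<lambda>v. {v}) ` Vsp (m * b)"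
        then obtain y where y: "y \<in> Vsp n" "B = {y}" unfolding n_def by auto
        show "B \<in> LA U W1 W2 vbar"
        proof (cases "y \<in> U")
          case True
          have "coset2 {vzero} y = {y}" by (simp add: cs)
          then show ?thesis unfolding LA_def W0' y(2) using True by blast
        next
          case False
          then have "vadd y vbar \<in> U" using index2 vbarU y(1) by blast
          moreover have "coset2 (coset2 {vzero} vbar) (vadd y vbar) = {y}" by (simp add: cs)
          ultimately show ?thesis unfolding LA_def W0' y(2) by blast
        qed
      qed
    qed
    then show False using nontriv unfolding trivial_partition_def by blast
  qed
  have Ipr: "I \<subset> {0..<b}"
  proof -
    have "I \<subseteq> {0..<b}" unfolding I_def by auto
    moreover have "I \<noteq> {0..<b}"
    proof
      assume "I = {0..<b}"
      then have "WS = Vsp n" unfolding WS_def n_def using m0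
        by (auto simp: div_less_iff_less_mult mult.commute)
      then have "vbar \<in> U" using WWS W1W W12(3) vbarU by auto
      then show False using vbarU by simp
    qed
    ultimately show ?thesis by blast
  qed
  have wallW: "wall m b W" unfolding wall_def using Ine Ipr WWS WS_def by blast
  show ?thesis using wallW W1W W2W by simp
qed

end
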